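(* Let $t_1,\dots,t_k\in T$ be transpositions whose roots $\alpha_{t_1},\dots,\alpha_{t_k}$ are linearly independent, and fix $1\le i\le k$. Then there is a reflection order $\prec$ on $T$ such that: (i) $t_1\prec t_2\prec\cdots\prec t_k$; (ii) the set of $t\in T$ with $\alpha_t\in\mathrm{span}_{\mathbb{R}}(\alpha_{t_1},\dots,\alpha_{t_i})$ is an interval under $\prec$; (iii) if $t,t'\in T$ are such that $\alpha_t\in\mathrm{span}_{\mathbb{R}}(\alpha_{t_1},\dots,\alpha_{t_i})$ and $\alpha_{t'}\in\mathrm{span}_{\mathbb{R}}(\alpha_{t_1},\dots,\alpha_{t_k})\setminus\mathrm{span}_{\mathbb{R}}(\alpha_{t_1},\dots,\alpha_{t_i})$, then $t\prec t'$ provided the coefficients of $\alpha_{t_{i+1}},\dots,\alpha_{t_k}$ in $\alpha_{t'}$ are each non-negative.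
   Context: $T$ is the set of transpositions of $S_n$; for $t=(a\,b)$ with $a<b$ its root is $\alpha_t=e_a-e_b\in\mathbb{R}^n$. A reflection order is a total order $\prec$ on $T$ such that for all $1\le a<b<c\le n$ either $(a\,b)\prec(a\,c)\prec(b\,c)$ or $(b\,c)\prec(a\,c)\prec(a\,b)$. *)

theory Defs
  imports "HOL-Analysis.Analysis"
begin

text \<open>The ground set {1..n} is modelled by a finite linearly ordered type 'n
  (n = CARD('n)). A transposition (a b) with a < b is the pair (a, b).\<close>

definition transps :: "('n::{finite,linorder} \<times> 'n) set" where
  "transps = {(a, b). a < b}"

definition troot :: "('n::{finite,linorder} \<times> 'n::{finite,linorder}) \<Rightarrow> real ^ 'n::{finite,linorder}" where
  "troot t = axis (fst t) 1 - axis (snd t) 1"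

definition reflection_order :: "(('n::{finite,linorder} \<times> 'n::{finite,linorder}) \<Rightarrow> ('n::{finite,linorder} \<times> 'n::{finite,linorder}) \<Rightarrow> bool) \<Rightarrow> bool" where
  "reflection_order R \<longleftrightarrow>
     (\<forall>t\<in>transps. \<not> R t t) \<and>
     (\<forall>t\<in>transps. \<forall>u\<in>transps. \<forall>v\<in>transps. R t u \<longrightarrow> R u v \<longrightarrow> R t v) \<and>
     (\<forall>t\<in>transps. \<forall>u\<in>transps. t \<noteq> u \<longrightarrow> R t u \<or> R u t) \<and>
     (\<forall>a b c. a < b \<and> b < c \<longrightarrow>
        (R (a, b) (a, c) \<and> R (a, c) (b, c)) \<or> (R (b, c) (a, c) \<and> R (a, c) (a, b)))"

definition order_interval :: "(('n::{finite,linorder} \<times> 'n) \<Rightarrow> ('n \<times> 'n) \<Rightarrow> bool) \<Rightarrow> ('n \<times> 'n) set \<Rightarrow> bool" where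
  "order_interval R S \<longleftrightarrow>
     (\<forall>x\<in>S. \<forall>z\<in>S. \<forall>y\<in>transps. R x y \<longrightarrow> R y z \<longrightarrow> y \<in> S)"

end

theory Submission imports Defs begin

definition lexless :: "(nat \<Rightarrow> real) \<Rightarrow> (nat \<Rightarrow> real) \<Rightarrow> bool" where
  "lexless u v \<longleftrightarrow> (\<exists>m. (\<forall>j<m. u j = v j) \<and> u m < v m)"

lemma lexless_irrefl: "\<not> lexless u u"
  unfolding lexless_def by auto

lemma lexless_trans:
  assumes "lexless u v" "lexless v w" shows "lexless u w"
proof -
  obtain m1 where m1: "\<forall>j<m1. u j = v j" "u m1 < v m1" using assms(1) unfolding lexless_def by blast
  obtain m2 where m2: "\<forall>j<m2. v j = w j" "v m2 < w m2" using assms(2) unfolding lexless_def by blast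
  show ?thesis unfolding lexless_def
  proof (cases m1 m2 rule: linorder_cases)
    case less then show "\<exists>m. (\<forall>j<m. u j = w j) \<and> u m < w m"
      using m1 m2 by (intro exI[of _ m1]) auto
  next
    case equal then show "\<exists>m. (\<forall>j<m. u j = w j) \<and> u m < w m"
      using m1 m2 by (intro exI[of _ m1]) auto
  next
    case greater then show "\<exists>m. (\<forall>j<m. u j = w j) \<and> u m < w m"
      using m1 m2 by (intro exI[of _ m2]) auto
  qed
qed

lemma lexless_asym: "lexless u v \<Longrightarrow> \<not> lexless v u"
  using lexless_trans lexless_irrefl by blast

lemma lexless_total:
  assumes "u \<noteq> v" shows "lexless u v \<or> lexless v u"
proof -
  obtain n where n: "u n \<noteq> v n" using assms by auto
  define m where "m = (LEAST n. u n \<noteq> v n)"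
  have m: "u m \<noteq> v m" unfolding m_def using n by (rule LeastI)
  have lt: "\<forall>j<m. u j = v j" unfolding m_def using not_less_Least by blast
  show ?thesis
  proof (cases "u m < v m")
    case True then show ?thesis using lt unfolding lexless_def by blast
  next
    case False then have "v m < u m" using m by auto
    then show ?thesis using lt unfolding lexless_def by (metis)
  qed
qed

lemma lexless_mediant:
  assumes "lexless u v" "p > 0" "q > 0" "\<forall>n. w n = (p * u n + q * v n) / (p + q)"
  shows "lexless u w \<and> lexless w v"
proof -
  obtain m where m: "\<forall>j<m. u j = v j" "u m < v m" using assms(1) unfolding lexless_def by blast
  have eq: "\<forall>j<m. w j = u j"
  proof (intro allI impI)
    fix j assume "j < m"
    then have "w j = (p * u j + q * u j) / (p + q)" using m assms(4) by auto
    also have "\<dots> = u j" using assms(2,3) by (simp add: field_simps)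
    finally show "w j = u j" .
  qed
  have wm: "w m = (p * u m + q * v m) / (p + q)" using assms(4) by simp
  have "q * u m < q * v m" using m(2) assms(3) by simp
  then have "u m * (p + q) < p * u m + q * v m" by (simp add: algebra_simps)
  then have a: "u m < w m" unfolding wm using assms(2,3) by (simp add: pos_less_divide_eq)
  have "p * u m < p * v m" using m(2) assms(2) by simp
  then have "p * u m + q * v m < v m * (p + q)" by (simp add: algebra_simps)
  then have b: "w m < v m" unfolding wm using assms(2,3) by (simp add: pos_divide_less_eq)
  show ?thesis unfolding lexless_def using eq m a b by (metis)
qed

lemma lex_between_zero:
  assumes u: "\<forall>n\<le>N. u n = 0" and w: "\<forall>n\<le>N. w n = 0"
    and uv: "lexless u v \<or> u = v" and vw: "lexless v w \<or> v = w"
  shows "\<forall>n\<le>N. v n = 0"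
proof (rule ccontr)
  assume "\<not> ?thesis"
  then obtain n where n: "n \<le> N" "v n \<noteq> 0" by auto
  define m where "m = (LEAST n. v n \<noteq> 0)"
  have m: "v m \<noteq> 0" unfolding m_def using n(2) by (rule LeastI)
  have mle: "m \<le> N" unfolding m_def using n by (meson Least_le le_trans)
  have lt: "\<forall>j<m. v j = 0" unfolding m_def using not_less_Least by blast
  show False
  proof (cases "v m > 0")
    case True
    have "lexless w v" unfolding lexless_def
      using lt w mle True by (intro exI[of _ m]) auto
    then show False using vw lexless_asym lexless_irrefl by blast
  next
    case False
    then have "v m < 0" using m by auto
    have "lexless v u" unfolding lexless_def
      using lt u mle \<open>v m < 0\<close> by (intro exI[of _ m]) auto
    then show False using uv lexless_asym lexless_irrefl by blast
  qed
qed

definition pless :: "('n::linorder \<times> 'n) \<Rightarrow> ('n \<times> 'n) \<Rightarrow> bool" where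
  "pless s t \<longleftrightarrow> fst s < fst t \<or> (fst s = fst t \<and> snd s < snd t)"

definition mkR :: "(('n::linorder \<times> 'n) \<Rightarrow> nat \<Rightarrow> real) \<Rightarrow> ('n \<times> 'n) \<Rightarrow> ('n \<times> 'n) \<Rightarrow> bool" where
  "mkR r s t \<longleftrightarrow> lexless (r s) (r t) \<or> (r s = r t \<and> pless s t)"

lemma mkR_refl:
  fixes r :: "('n::{finite,linorder} \<times> 'n) \<Rightarrow> nat \<Rightarrow> real"
  assumes med: "\<And>a b c. a < b \<Longrightarrow> b < c \<Longrightarrow> \<exists>p q. p > 0 \<and> q > 0 \<and>
     (\<forall>n. r (a,c) n = (p * r (a,b) n + q * r (b,c) n) / (p + q))"
  shows "reflection_order (mkR r)"
  unfolding reflection_order_def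
proof (intro conjI ballI allI impI)
  fix t :: "'n \<times> 'n" show "\<not> mkR r t t" unfolding mkR_def pless_def using lexless_irrefl by auto
next
  fix t u v :: "'n \<times> 'n" assume "mkR r t u" "mkR r u v"
  then show "mkR r t v" unfolding mkR_def pless_def by (elim disjE conjE) (auto intro: lexless_trans less_trans)
next
  fix t u :: "'n \<times> 'n" assume "t \<noteq> u"
  show "mkR r t u \<or> mkR r u t"
  proof (cases "r t = r u")
    case True
    have "pless t u \<or> pless u t" using \<open>t \<noteq> u\<close> unfolding pless_def
      by (metis linorder_neqE prod.expand)
    then show ?thesis unfolding mkR_def using True by auto
  next
    case False then show ?thesis unfolding mkR_def using lexless_total by blast
  qed
next
  fix a b c :: 'n assume abc: "a < b \<and> b < c"
  obtain p q where pq: "p > 0" "q > 0" "\<forall>n. r (a,c) n = (p * r (a,b) n + q * r (b,c) n) / (p + q)"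
    using med abc by blast
  show "mkR r (a, b) (a, c) \<and> mkR r (a, c) (b, c) \<or> mkR r (b, c) (a, c) \<and> mkR r (a, c) (a, b)"
  proof (cases "r (a,b) = r (b,c)")
    case True
    have "r (a,c) = r (a,b)"
    proof
      fix n have "r (a,c) n = (p * r (a,b) n + q * r (a,b) n) / (p + q)" using pq True by simp
      also have "\<dots> = r (a,b) n" using pq by (simp add: field_simps)
      finally show "r (a,c) n = r (a,b) n" .
    qed
    then show ?thesis unfolding mkR_def pless_def using True abc by auto
  next
    case False
    then consider "lexless (r (a,b)) (r (b,c))" | "lexless (r (b,c)) (r (a,b))"
      using lexless_total by blast
    then show ?thesis
    proof cases
      case 1
      then show ?thesis using lexless_mediant[OF 1 pq] unfolding mkR_def by blast
    next
      case 2
      have "\<forall>n. r (a,c) n = (q * r (b,c) n + p * r (a,b) n) / (q + p)" using pq(3) by (simp add: add.commute)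
      then show ?thesis using lexless_mediant[OF 2 pq(2) pq(1)] unfolding mkR_def by blast
    qed
  qed
qed


definition wgt :: "'n::{finite,linorder} \<Rightarrow> real" where
  "wgt a = real (card {x. a < x})"

definition gt :: "('n::{finite,linorder} \<times> 'n) \<Rightarrow> real" where
  "gt t = wgt (fst t) - wgt (snd t)"

lemma wgt_less: fixes a b :: "'n::{finite,linorder}" assumes "a < b" shows "wgt b < wgt a"
proof -
  have "{x. b < x} \<subset> {x. a < x}" using assms by auto
  then have "card {x. b < x} < card {x. a < x}" by (rule psubset_card_mono[rotated]) simp
  then show ?thesis unfolding wgt_def by simp
qed

lemma gt_pos: "t \<in> transps \<Longrightarrow> gt t > 0"
  unfolding transps_def gt_def using wgt_less by (cases t) auto

lemma troot_nth: "troot t $ x = (if x = fst t then 1 else 0) - (if x = snd t then 1 else 0)"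
  unfolding troot_def by (simp add: axis_def)

lemma troot_inj:
  assumes "s \<in> transps" "t \<in> transps" "troot s = troot t" shows "s = t"
proof -
  have s: "fst s < snd s" and t: "fst t < snd t" using assms(1,2) unfolding transps_def by auto
  have 1: "troot s $ fst s = troot t $ fst s" and 2: "troot s $ snd s = troot t $ snd s"
    using assms(3) by auto
  have "fst s = fst t" using 1 s t unfolding troot_nth by (auto split: if_splits)
  moreover have "snd s = snd t" using 2 s t unfolding troot_nth by (auto split: if_splits)
  ultimately show ?thesis by (simp add: prod_eq_iff)
qed

lemma troot_add: "troot (a, c) = troot (a, b) + troot (b, c)"
  unfolding troot_def by simp


theorem lemma4p5:
  fixes ts :: "nat \<Rightarrow> ('n::{finite,linorder} \<times> 'n)" and k i :: nat
  assumes ts_T: "\<forall>j\<in>{1..k}. ts j \<in> transps"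
    and ts_inj: "inj_on ts {1..k}"
    and indep: "independent (troot ` ts ` {1..k})"
    and i_ge: "1 \<le> i" and i_le: "i \<le> k"
  shows "\<exists>R. reflection_order R \<and>
     (\<forall>j\<in>{1..k}. \<forall>j'\<in>{1..k}. j < j' \<longrightarrow> R (ts j) (ts j')) \<and>
     order_interval R {t \<in> transps. troot t \<in> span (troot ` ts ` {1..i})} \<and>
     (\<forall>t\<in>transps. \<forall>t'\<in>transps.
        troot t \<in> span (troot ` ts ` {1..i}) \<longrightarrow>
        troot t' \<in> span (troot ` ts ` {1..k}) - span (troot ` ts ` {1..i}) \<longrightarrow>
        (\<forall>c :: nat \<Rightarrow> real.
           troot t' = (\<Sum>j=1..k. c j *\<^sub>R troot (ts j)) \<longrightarrow>
           (\<forall>j\<in>{i+1..k}. 0 \<le> c j) \<longrightarrow> R t t'))"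
proof -
  let ?A = "troot ` ts ` {1..k}"
  let ?Ai = "troot ` ts ` {1..i}"
  let ?V = "span ?Ai"
  have AiA: "?Ai \<subseteq> ?A" using i_le by auto
  have indi: "independent ?Ai" using independent_mono[OF indep AiA] .
  have rinj: "inj_on (\<lambda>j. troot (ts j)) {1..k}"
  proof (rule inj_onI)
    fix x y assume "x \<in> {1..k}" "y \<in> {1..k}" "troot (ts x) = troot (ts y)"
    then have "ts x = ts y" using troot_inj ts_T by blast
    then show "x = y" using ts_inj \<open>x \<in> {1..k}\<close> \<open>y \<in> {1..k}\<close> by (meson inj_onD)
  qed
  define idx where "idx = inv_into {1..k} (\<lambda>j. troot (ts j))"
  have idx: "idx (troot (ts j)) = j" if "j \<in> {1..k}" for j
    unfolding idx_def using inv_into_f_f[OF rinj that] by simp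
  obtain f0 where f0: "linear f0"
    "\<forall>v\<in>?A. f0 v = (if idx v > i then real (idx v) * gt (ts (idx v)) else 0)"
    using linear_independent_extend[OF indep, of "\<lambda>v. if idx v > i then real (idx v) * gt (ts (idx v)) else 0"] by blast
  have f0v: "f0 (troot (ts j)) = (if j > i then real j * gt (ts j) else 0)" if "j \<in> {1..k}" for j
    using f0(2) idx[OF that] that by auto
  obtain f1 where f1: "linear f1"
    "\<forall>v\<in>?A. f1 v = (if idx v \<le> i then real (idx v) * gt (ts (idx v)) else 0)"
    using linear_independent_extend[OF indep, of "\<lambda>v. if idx v \<le> i then real (idx v) * gt (ts (idx v)) else 0"] by blast
  have f1v: "f1 (troot (ts j)) = (if j \<le> i then real j * gt (ts j) else 0)" if "j \<in> {1..k}" for j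
    using f1(2) idx[OF that] that by auto
  define NS where "NS = {t \<in> transps. troot t \<notin> ?V}"
  have finNS: "finite NS" by simp
  have ex: "\<forall>t\<in>NS. \<exists>f::(real,'n::{finite,linorder}) vec \<Rightarrow> real. linear f \<and> (\<forall>v\<in>insert (troot t) ?Ai. f v = (if v = troot t then 1 else 0))"
  proof
    fix t assume "t \<in> NS"
    then have "troot t \<notin> ?V" unfolding NS_def by auto
    then have "independent (insert (troot t) ?Ai)" using independent_insertI indi by blast
    then show "\<exists>f::(real,'n::{finite,linorder}) vec \<Rightarrow> real. linear f \<and> (\<forall>v\<in>insert (troot t) ?Ai. f v = (if v = troot t then 1 else 0))"
      using linear_independent_extend[of "insert (troot t) ?Ai" "\<lambda>v. if v = troot t then 1 else 0"] by blast
  qed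
  from bchoice[OF ex] obtain psi :: "('n \<times> 'n) \<Rightarrow> (real,'n) vec \<Rightarrow> real" where psi: "\<forall>t\<in>NS. linear (psi t) \<and>
      (\<forall>v\<in>insert (troot t) ?Ai. psi t v = (if v = troot t then 1 else 0))"
    by blast
  have psi_lin: "linear (psi t)" if "t \<in> NS" for t using psi that by blast
  have psi_self: "psi t (troot t) = 1" if "t \<in> NS" for t using psi that by auto
  have psi_Ai: "psi t v = 0" if "t \<in> NS" "v \<in> ?Ai" for t v
  proof -
    have "troot t \<notin> ?V" using that(1) unfolding NS_def by auto
    then have "v \<noteq> troot t" using that(2) by (metis span_base)
    have "v \<in> insert (troot t) ?Ai" using that(2) by blast
    moreover have "\<forall>v\<in>insert (troot t) ?Ai. psi t v = (if v = troot t then 1 else 0)"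
      using psi that(1) by blast
    ultimately have "psi t v = (if v = troot t then 1 else 0)" by (rule bspec[rotated])
    then show ?thesis using \<open>v \<noteq> troot t\<close> by simp
  qed
  define N where "N = card NS"
  obtain h where h: "bij_betw h {0..<N} NS" unfolding N_def using ex_bij_betw_nat_finite[OF finNS] by blast
  define F where "F = (\<lambda>n. case n of 0 \<Rightarrow> f0 | Suc m \<Rightarrow> if m < N then psi (h m) else f1)"
  have hNS: "h m \<in> NS" if "m < N" for m using h that unfolding bij_betw_def by auto
  have Flin: "linear (F n)" for n
    unfolding F_def using f0 f1 psi_lin hNS by (cases n) auto
  have Fzero: "F n v = 0" if "n \<le> N" "v \<in> ?V" for n v
  proof (rule linear_eq_0_on_span[OF Flin _ that(2)])
    fix x assume x: "x \<in> ?Ai"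
    then obtain j where j: "j \<in> {1..i}" "x = troot (ts j)" by auto
    then have jk: "j \<in> {1..k}" using i_le by auto
    show "F n x = 0"
    proof (cases n)
      case 0 then show ?thesis unfolding F_def using f0v[OF jk] j by simp
    next
      case (Suc m) then have "m < N" using that(1) by simp
      then show ?thesis unfolding F_def using Suc psi_Ai[OF hNS x] by simp
    qed
  qed
  define r where "r = (\<lambda>t n. F n (troot t) / gt t)"
  define R where "R = mkR r"
  have refl: "reflection_order R"
    unfolding R_def
  proof (rule mkR_refl)
    fix a b c :: 'n assume ab: "a < b" and bc: "b < c"
    have p: "gt (a,b) > 0" using gt_pos ab unfolding transps_def by auto
    have q: "gt (b,c) > 0" using gt_pos bc unfolding transps_def by auto
    have gac: "gt (a,c) = gt (a,b) + gt (b,c)" unfolding gt_def by simp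
    show "\<exists>p q. p > 0 \<and> q > 0 \<and> (\<forall>n. r (a,c) n = (p * r (a,b) n + q * r (b,c) n) / (p + q))"
    proof (intro exI conjI allI)
      fix n
      have "F n (troot (a,c)) = F n (troot (a,b)) + F n (troot (b,c))"
        unfolding troot_add[of a c b] using Flin linear_add by blast
      then show "r (a,c) n = (gt (a,b) * r (a,b) n + gt (b,c) * r (b,c) n) / (gt (a,b) + gt (b,c))"
        unfolding r_def gac using p q by simp
    qed (use p q in auto)
  qed
  have rS: "r t n = 0" if "troot t \<in> ?V" "n \<le> N" for t n
    unfolding r_def using Fzero[OF that(2,1)] by simp
  have r0: "r (ts j) 0 = (if j > i then real j else 0)" if "j \<in> {1..k}" for j
    using f0v[OF that] gt_pos[of "ts j"] ts_T that unfolding r_def F_def by auto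
  have rN: "r (ts j) (Suc N) = (if j \<le> i then real j else 0)" if "j \<in> {1..k}" for j
    using f1v[OF that] gt_pos[of "ts j"] ts_T that unfolding r_def F_def by auto
  have part1: "\<forall>j\<in>{1..k}. \<forall>j'\<in>{1..k}. j < j' \<longrightarrow> R (ts j) (ts j')"
  proof (intro ballI impI)
    fix j j' assume j: "j \<in> {1..k}" and j': "j' \<in> {1..k}" and jj: "j < j'"
    show "R (ts j) (ts j')"
    proof (cases "j' > i")
      case True
      have "r (ts j) 0 < r (ts j') 0" using r0[OF j] r0[OF j'] True jj j by auto
      then have "lexless (r (ts j)) (r (ts j'))" unfolding lexless_def by (intro exI[of _ 0]) auto
      then show ?thesis unfolding R_def mkR_def by blast
    next
      case False
      then have ji: "j \<le> i" "j' \<le> i" using jj by auto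
      have inV: "troot (ts j) \<in> ?V" "troot (ts j') \<in> ?V" using ji j j' by (auto intro: span_base)
      have "\<forall>n<Suc N. r (ts j) n = r (ts j') n" using rS[OF inV(1)] rS[OF inV(2)] by auto
      moreover have "r (ts j) (Suc N) < r (ts j') (Suc N)" using rN[OF j] rN[OF j'] ji jj by auto
      ultimately have "lexless (r (ts j)) (r (ts j'))" unfolding lexless_def by blast
      then show ?thesis unfolding R_def mkR_def by blast
    qed
  qed
  have part2: "order_interval R {t \<in> transps. troot t \<in> ?V}"
    unfolding order_interval_def
  proof (intro ballI impI)
    fix x z y assume x: "x \<in> {t \<in> transps. troot t \<in> ?V}" and z: "z \<in> {t \<in> transps. troot t \<in> ?V}"
      and y: "y \<in> transps" and xy: "R x y" and yz: "R y z"
    show "y \<in> {t \<in> transps. troot t \<in> ?V}"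
    proof (rule ccontr)
      assume "\<not> ?thesis"
      then have yNS: "y \<in> NS" unfolding NS_def using y by auto
      then obtain m where m: "m < N" "h m = y" using h unfolding bij_betw_def by (metis atLeastLessThan_iff imageE)
      have "\<forall>n\<le>N. r y n = 0"
      proof (rule lex_between_zero)
        show "\<forall>n\<le>N. r x n = 0" using rS x by auto
        show "\<forall>n\<le>N. r z n = 0" using rS z by auto
        show "lexless (r x) (r y) \<or> r x = r y" using xy unfolding R_def mkR_def by blast
        show "lexless (r y) (r z) \<or> r y = r z" using yz unfolding R_def mkR_def by blast
      qed
      then have "r y (Suc m) = 0" using m by auto
      moreover have "r y (Suc m) = 1 / gt y" unfolding r_def F_def using m psi_self[OF yNS] by simp
      ultimately show False using gt_pos[OF y] by simp
    qed
  qed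
  have part3: "\<forall>t\<in>transps. \<forall>t'\<in>transps.
        troot t \<in> ?V \<longrightarrow>
        troot t' \<in> span ?A - ?V \<longrightarrow>
        (\<forall>c :: nat \<Rightarrow> real.
           troot t' = (\<Sum>j=1..k. c j *\<^sub>R troot (ts j)) \<longrightarrow>
           (\<forall>j\<in>{i+1..k}. 0 \<le> c j) \<longrightarrow> R t t')"
  proof (intro ballI impI allI)
    fix t t' c assume t: "t \<in> transps" and t': "t' \<in> transps" and tV: "troot t \<in> ?V"
      and t'V: "troot t' \<in> span ?A - ?V" and cdef: "troot t' = (\<Sum>j=1..k. c j *\<^sub>R troot (ts j))"
      and cpos: "\<forall>j\<in>{i+1..k}. 0 \<le> c j"
    have f0t': "f0 (troot t') = (\<Sum>j=1..k. c j * (if j > i then real j * gt (ts j) else 0))"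
      unfolding cdef linear_sum[OF f0(1)] linear_scale[OF f0(1)] using f0v by simp
    have terms: "\<forall>j\<in>{1..k}. 0 \<le> c j * (if j > i then real j * gt (ts j) else 0)"
    proof
      fix j assume j: "j \<in> {1..k}"
      show "0 \<le> c j * (if j > i then real j * gt (ts j) else 0)"
      proof (cases "j > i")
        case True then have "0 \<le> c j" using cpos j by auto
        moreover have "0 < gt (ts j)" using gt_pos[of "ts j"] ts_T j by auto
        ultimately show ?thesis using True by simp
      qed simp
    qed
    have pos: "f0 (troot t') > 0"
    proof (rule ccontr)
      assume "\<not> ?thesis"
      then have "f0 (troot t') = 0" using f0t' terms sum_nonneg[of "{1..k}"] by (smt (verit))
      then have sumeq: "(\<Sum>j=1..k. c j * (if j > i then real j * gt (ts j) else 0)) = 0" using f0t' by simp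
      have iff: "(\<Sum>j=1..k. c j * (if j > i then real j * gt (ts j) else 0)) = 0 \<longleftrightarrow>
          (\<forall>j\<in>{1..k}. c j * (if j > i then real j * gt (ts j) else 0) = 0)"
        by (rule sum_nonneg_eq_0_iff) (use terms in auto)
      have allz: "\<forall>j\<in>{1..k}. c j * (if j > i then real j * gt (ts j) else 0) = 0"
        using iffD1[OF iff sumeq] .
      have "troot t' \<in> ?V" unfolding cdef
      proof (rule span_sum)
        fix j assume j: "j \<in> {1..k}"
        show "c j *\<^sub>R troot (ts j) \<in> ?V"
        proof (cases "j > i")
          case True
          have "0 < gt (ts j)" using gt_pos[of "ts j"] ts_T j by auto
          then have "c j = 0" using allz j True by auto
          then show ?thesis by (simp add: span_zero)
        next
          case False
          then have "troot (ts j) \<in> ?V" using j by (auto intro: span_base)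
          then show ?thesis by (rule span_scale)
        qed
      qed
      then show False using t'V by blast
    qed
    have "r t 0 = 0" using rS[OF tV] by simp
    moreover have "r t' 0 > 0" unfolding r_def F_def using pos gt_pos[OF t'] by simp
    ultimately have "lexless (r t) (r t')" unfolding lexless_def by (intro exI[of _ 0]) auto
    then show "R t t'" unfolding R_def mkR_def by blast
  qed
  show ?thesis using refl part1 part2 part3 by blast
qed

end
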